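(* Let $\mathcal{F}=\{f_i\}_{i=1}^N$ be a frame for $\mathbb{R}^n$. Then $d(\mathcal{F})$ is the largest integer $k$ such that there exists a $k$-dimensional maximal $\mathcal{F}$-PR subspace.
   Context: A frame for $\mathbb{R}^n$ is a finite spanning sequence. For $\Lambda\subseteq\{1,\dots,N\}$ let $\mathcal{F}_\Lambda=\{f_i\}_{i\in\Lambda}$, $\Lambda^c$ its complement, and $d_\Lambda=\max\{\dim\mathrm{span}(\mathcal{F}_\Lambda),\dim\mathrm{span}(\mathcal{F}_{\Lambda^c})\}$; define $d(\mathcal{F})=\min\{d_\Lambda:\Lambda\subseteq\{1,\dots,N\}\}$. A finite sequence $\{g_i\}$ in a subspace $M$ is a phase-retrievable frame for $M$ if it spans $M$ and $|\langle x,g_i\rangle|=|\langle y,g_i\rangle|$ for all $i$ with $x,y\in M$ implies $x=\pm y$. A subspace $M$ is an $\mathcal{F}$-PR subspace if $\{P_Mf_i\}_{i=1}^N$ is a phase-retrievable frame for $M$, where $P_M$ is the orthogonal projection onto $M$; it is maximal if it is not a proper subspace of another $\mathcal{F}$-PR subspace. *)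

theory Defs
  imports "HOL-Analysis.Analysis"
begin

definition is_frame :: "(nat \<Rightarrow> real^'n) \<Rightarrow> nat \<Rightarrow> bool" where
  "is_frame f N \<longleftrightarrow> span (f ` {..<N}) = UNIV"

definition d_Lam :: "(nat \<Rightarrow> real^'n) \<Rightarrow> nat \<Rightarrow> nat set \<Rightarrow> nat" where
  "d_Lam f N L = max (dim (span (f ` L))) (dim (span (f ` ({..<N} - L))))"

definition d_frame :: "(nat \<Rightarrow> real^'n) \<Rightarrow> nat \<Rightarrow> nat" where
  "d_frame f N = Min {d_Lam f N L | L. L \<subseteq> {..<N}}"

definition proj :: "(real^'n) set \<Rightarrow> real^'n \<Rightarrow> real^'n" where
  "proj M x = (THE y. y \<in> M \<and> (\<forall>z\<in>M. (x - y) \<bullet> z = 0))"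

definition pr_frame_for :: "(nat \<Rightarrow> real^'n) \<Rightarrow> nat \<Rightarrow> (real^'n) set \<Rightarrow> bool" where
  "pr_frame_for g N M \<longleftrightarrow> g ` {..<N} \<subseteq> M \<and> span (g ` {..<N}) = M \<and>
     (\<forall>x\<in>M. \<forall>y\<in>M. (\<forall>i<N. \<bar>x \<bullet> g i\<bar> = \<bar>y \<bullet> g i\<bar>) \<longrightarrow> x = y \<or> x = - y)"

definition F_PR :: "(nat \<Rightarrow> real^'n) \<Rightarrow> nat \<Rightarrow> (real^'n) set \<Rightarrow> bool" where
  "F_PR f N M \<longleftrightarrow> subspace M \<and> pr_frame_for (\<lambda>i. proj M (f i)) N M"

definition maximal_F_PR :: "(nat \<Rightarrow> real^'n) \<Rightarrow> nat \<Rightarrow> (real^'n) set \<Rightarrow> bool" where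
  "maximal_F_PR f N M \<longleftrightarrow> F_PR f N M \<and> \<not> (\<exists>M'. F_PR f N M' \<and> M \<subset> M')"

end

theory Submission
  imports Defs
begin


lemma proj_ex1:
  fixes M :: "(real^'n) set"
  assumes "subspace M"
  shows "\<exists>!y. y \<in> M \<and> (\<forall>z\<in>M. (x - y) \<bullet> z = 0)"
proof -
  obtain y z where y: "y \<in> span M" and z: "\<And>w. w \<in> span M \<Longrightarrow> orthogonal z w" and xe: "x = y + z"
    using orthogonal_subspace_decomp_exists[of M x] by metis
  have sM: "span M = M" using assms by (simp add: span_eq_iff)
  have zx: "x - y = z" using xe by simp
  have ex: "y \<in> M \<and> (\<forall>w\<in>M. (x - y) \<bullet> w = 0)"
    using y z sM unfolding zx orthogonal_def by simp
  show ?thesis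
  proof (rule ex1I[of _ y])
    show "y \<in> M \<and> (\<forall>w\<in>M. (x - y) \<bullet> w = 0)" by (fact ex)
  next
    fix y' assume h: "y' \<in> M \<and> (\<forall>w\<in>M. (x - y') \<bullet> w = 0)"
    have "y' - y \<in> M" using h ex assms by (simp add: subspace_diff)
    then have h1: "(x - y) \<bullet> (y' - y) = 0" and h2: "(x - y') \<bullet> (y' - y) = 0" using h ex by auto
    have e: "y' - y = (x - y) - (x - y')" by simp
    have "(y' - y) \<bullet> (y' - y) = (x - y) \<bullet> (y' - y) - (x - y') \<bullet> (y' - y)"
      by (subst (1) e, rule inner_diff_left)
    then have "(y' - y) \<bullet> (y' - y) = 0" using h1 h2 by simp
    then show "y' = y" by simp
  qed
qed

lemma proj_char:
  fixes M :: "(real^'n) set"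
  assumes "subspace M"
  shows "proj M x \<in> M" "\<And>z. z \<in> M \<Longrightarrow> (x - proj M x) \<bullet> z = 0"
proof -
  have "proj M x \<in> M \<and> (\<forall>z\<in>M. (x - proj M x) \<bullet> z = 0)"
    unfolding proj_def by (rule theI'[OF proj_ex1[OF assms]])
  then show "proj M x \<in> M" "\<And>z. z \<in> M \<Longrightarrow> (x - proj M x) \<bullet> z = 0" by auto
qed

lemma proj_unique:
  fixes M :: "(real^'n) set"
  assumes "subspace M" "y \<in> M" "\<And>z. z \<in> M \<Longrightarrow> (x - y) \<bullet> z = 0"
  shows "proj M x = y"
  unfolding proj_def by (rule the1_equality[OF proj_ex1[OF assms(1)]]) (use assms in auto)

lemma proj_id: "subspace M \<Longrightarrow> m \<in> M \<Longrightarrow> proj M m = m"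
  by (rule proj_unique) auto

lemma proj_zero: "subspace M \<Longrightarrow> (\<And>z. z \<in> M \<Longrightarrow> w \<bullet> z = 0) \<Longrightarrow> proj M w = 0"
  by (rule proj_unique) (auto simp: subspace_0)

lemma proj_linear:
  fixes M :: "(real^'n) set"
  assumes "subspace M"
  shows "linear (proj M)"
proof (rule linearI)
  fix x y
  show "proj M (x + y) = proj M x + proj M y"
  proof (rule proj_unique[OF assms])
    show "proj M x + proj M y \<in> M" by (simp add: assms proj_char(1) subspace_add)
    fix z assume z: "z \<in> M"
    have "(x + y - (proj M x + proj M y)) \<bullet> z = (x - proj M x) \<bullet> z + (y - proj M y) \<bullet> z"
      by (simp add: algebra_simps inner_add_left inner_diff_left)
    then show "(x + y - (proj M x + proj M y)) \<bullet> z = 0" using proj_char(2)[OF assms z] by simp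
  qed
next
  fix c :: real and x
  show "proj M (c *\<^sub>R x) = c *\<^sub>R proj M x"
  proof (rule proj_unique[OF assms])
    show "c *\<^sub>R proj M x \<in> M" by (simp add: assms proj_char(1) subspace_scale)
    fix z assume "z \<in> M"
    then have "(x - proj M x) \<bullet> z = 0" by (rule proj_char(2)[OF assms])
    then show "(c *\<^sub>R x - c *\<^sub>R proj M x) \<bullet> z = 0"
      by (metis inner_scaleR_left mult_zero_right scaleR_diff_right)
  qed
qed


lemma greedy:
  fixes \<V> :: "'a::euclidean_space set set"
  assumes "finite \<V>"
  shows "k \<le> DIM('a) \<Longrightarrow> \<exists>W. subspace W \<and> dim W = k \<and> (\<forall>V\<in>\<V>. dim (span (V \<union> W)) = min DIM('a) (dim V + k))"
proof (induction k)
  case 0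
  show ?case
    by (rule exI[of _ "{0}"]) (auto simp: subspace_0 dim_subset_UNIV span_insert_0 [of 0] min_def
        intro: subspace_single_0 antisym dim_subset_UNIV)
next
  case (Suc k)
  then obtain W where W: "subspace W" "dim W = k" "\<forall>V\<in>\<V>. dim (span (V \<union> W)) = min DIM('a) (dim V + k)"
    by auto
  define P where "P = insert W {span (V \<union> W) | V. V \<in> \<V> \<and> dim (span (V \<union> W)) < DIM('a)}"
  have fP: "finite P" unfolding P_def using assms by auto
  have nP: "negligible (\<Union>P)"
  proof (rule negligible_Union[OF fP])
    fix T assume "T \<in> P"
    then have "dim T < DIM('a)" unfolding P_def using W Suc.prems by auto
    then show "negligible T" by (rule negligible_lowdim)
  qed
  then obtain v where v: "v \<notin> \<Union>P"
    by (metis UNIV_I non_negligible_UNIV subsetI subset_antisym)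
  have sW: "span W = W" using W(1) by (simp add: span_eq_iff)
  have vW: "v \<notin> span W" using v unfolding sW P_def by blast
  define W' where "W' = span (insert v W)"
  have "dim W' = Suc k" unfolding W'_def using vW W by (simp add: dim_insert)
  moreover have "dim (span (V \<union> W')) = min DIM('a) (dim V + Suc k)" if V: "V \<in> \<V>" for V
  proof -
    have e: "span (V \<union> W') = span (insert v (V \<union> W))"
    proof (rule subset_antisym)
      have "V \<union> span (insert v W) \<subseteq> span (insert v (V \<union> W))"
        using span_mono[of "insert v W" "insert v (V \<union> W)"] span_superset[of "insert v (V \<union> W)"] by blast
      then show "span (V \<union> W') \<subseteq> span (insert v (V \<union> W))"
        unfolding W'_def by (rule span_minimal) simp
      have "insert v (V \<union> W) \<subseteq> V \<union> W'"
        unfolding W'_def using span_superset[of "insert v W"] by blast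
      then show "span (insert v (V \<union> W)) \<subseteq> span (V \<union> W')" by (rule span_mono)
    qed
    show ?thesis
    proof (cases "dim (span (V \<union> W)) < DIM('a)")
      case True
      then have "v \<notin> span (V \<union> W)" using v V unfolding P_def by auto
      then have "dim (span (V \<union> W')) = dim (span (V \<union> W)) + 1" unfolding e by (simp add: dim_insert)
      moreover have "dim (span (V \<union> W')) \<le> DIM('a)" by (rule dim_subset_UNIV)
      ultimately show ?thesis using True W(3) V by auto
    next
      case False
      then have "dim (span (V \<union> W)) = DIM('a)" by (meson dim_subset_UNIV le_neq_implies_less)
      then have "dim (span (V \<union> W')) \<ge> DIM('a)" unfolding e by (simp add: dim_insert)
      moreover have "dim (span (V \<union> W')) \<le> DIM('a)" by (rule dim_subset_UNIV)
      ultimately show ?thesis using False W(3) V by auto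
    qed
  qed
  ultimately show ?case by (intro exI[of _ W']) (auto simp: W'_def)
qed



lemma exists_perp:
  fixes M :: "(real^'n) set"
  assumes "subspace M" "span S \<subseteq> M" "span S \<noteq> M"
  shows "\<exists>u\<in>M. u \<noteq> 0 \<and> (\<forall>s\<in>S. u \<bullet> s = 0)"
proof -
  obtain x where x: "x \<in> M" "x \<notin> span S" using assms by blast
  obtain y z where y: "y \<in> span S" and z: "\<And>w. w \<in> span S \<Longrightarrow> orthogonal z w" and xe: "x = y + z"
    using orthogonal_subspace_decomp_exists[of S x] by metis
  have zx: "z = x - y" using xe by simp
  have "z \<in> M" unfolding zx using x y assms by (meson subsetD subspace_diff)
  moreover have "z \<noteq> 0" using x y xe by auto
  moreover have "\<forall>s\<in>S. z \<bullet> s = 0" using z span_superset unfolding orthogonal_def by blast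
  ultimately show ?thesis by blast
qed

lemma pr_complement:
  fixes g :: "nat \<Rightarrow> real^'n"
  assumes M: "subspace M" and P: "pr_frame_for g N M" and L: "L \<subseteq> {..<N}"
  shows "span (g ` L) = M \<or> span (g ` ({..<N} - L)) = M"
proof (rule ccontr)
  assume nc: "\<not> (span (g ` L) = M \<or> span (g ` ({..<N} - L)) = M)"
  have sub: "g ` {..<N} \<subseteq> M" and PR: "\<forall>x\<in>M. \<forall>y\<in>M. (\<forall>i<N. \<bar>x \<bullet> g i\<bar> = \<bar>y \<bullet> g i\<bar>) \<longrightarrow> x = y \<or> x = - y"
    using P unfolding pr_frame_for_def by auto
  have s1: "span (g ` L) \<subseteq> M" using sub L M by (intro span_minimal) auto
  have s2: "span (g ` ({..<N} - L)) \<subseteq> M" using sub M by (intro span_minimal) auto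
  obtain u where u: "u \<in> M" "u \<noteq> 0" "\<forall>s\<in>g ` L. u \<bullet> s = 0"
    using exists_perp[OF M s1] nc by blast
  obtain v where v: "v \<in> M" "v \<noteq> 0" "\<forall>s\<in>g ` ({..<N} - L). v \<bullet> s = 0"
    using exists_perp[OF M s2] nc by blast
  have "\<forall>i<N. \<bar>(u + v) \<bullet> g i\<bar> = \<bar>(u - v) \<bullet> g i\<bar>"
  proof (intro allI impI)
    fix i assume i: "i < N"
    show "\<bar>(u + v) \<bullet> g i\<bar> = \<bar>(u - v) \<bullet> g i\<bar>"
    proof (cases "i \<in> L")
      case True
      then have "u \<bullet> g i = 0" using u by auto
      then show ?thesis by (simp add: inner_add_left inner_diff_left)
    next
      case False
      then have "v \<bullet> g i = 0" using v i by auto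
      then show ?thesis by (simp add: inner_add_left inner_diff_left)
    qed
  qed
  moreover have "u + v \<in> M" "u - v \<in> M" using u v M by (auto simp: subspace_add subspace_diff)
  ultimately have "u + v = u - v \<or> u + v = - (u - v)" using PR by blast
  then show False
  proof
    assume "u + v = u - v"
    then have "v + v = 0" by (simp add: algebra_simps)
    then show False using v by (metis scaleR_2 scaleR_eq_0_iff zero_neq_numeral)
  next
    assume "u + v = - (u - v)"
    then have "u + u = 0" by (simp add: algebra_simps)
    then show False using u by (metis scaleR_2 scaleR_eq_0_iff zero_neq_numeral)
  qed
qed

lemma span_proj_img:
  assumes "subspace M"
  shows "span ((\<lambda>i. proj M (f i)) ` L) = proj M ` span (f ` L)"
proof -
  have "(\<lambda>i. proj M (f i)) ` L = proj M ` (f ` L)" by (simp add: image_image)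
  then show ?thesis using span_linear_image[OF proj_linear[OF assms]] by simp
qed

lemma FPR_dim_le:
  assumes F: "F_PR f N M" and L: "L \<subseteq> {..<N}"
  shows "dim M \<le> d_Lam f N L"
proof -
  have M: "subspace M" and P: "pr_frame_for (\<lambda>i. proj M (f i)) N M" using F unfolding F_PR_def by auto
  have le: "dim (span ((\<lambda>i. proj M (f i)) ` K)) \<le> dim (span (f ` K))" for K
  proof -
    have "dim (span ((\<lambda>i. proj M (f i)) ` K)) = dim (proj M ` span (f ` K))" by (simp add: span_proj_img[OF M])
    also have "\<dots> \<le> dim (span (f ` K))" by (rule dim_image_le[OF proj_linear[OF M]])
    finally show ?thesis .
  qed
  from pr_complement[OF M P L] show ?thesis
    unfolding d_Lam_def using le[of L] le[of "{..<N} - L"] by (metis max.coboundedI1 max.coboundedI2 order_trans)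
qed



theorem theorem3p2:
  fixes f :: "nat \<Rightarrow> real^'n" and N :: nat
  assumes "is_frame f N"
  shows "(\<exists>M. maximal_F_PR f N M \<and> dim M = d_frame f N) \<and>
         (\<forall>k. (\<exists>M. maximal_F_PR f N M \<and> dim M = k) \<longrightarrow> k \<le> d_frame f N)"
proof -
  define d where "d = d_frame f N"
  have seteq: "{d_Lam f N L | L. L \<subseteq> {..<N}} = d_Lam f N ` Pow {..<N}" by auto
  have d_le: "d \<le> d_Lam f N L" if "L \<subseteq> {..<N}" for L
    unfolding d_def d_frame_def seteq using that by (intro Min_le) auto
  obtain L0 where L0: "L0 \<subseteq> {..<N}" "d = d_Lam f N L0"
  proof -
    have "d \<in> d_Lam f N ` Pow {..<N}" unfolding d_def d_frame_def seteq by (rule Min_in) auto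
    then show ?thesis using that by auto
  qed
  have upper: "dim M \<le> d" if "F_PR f N M" for M
    using FPR_dim_le[OF that L0(1)] L0(2) by simp
  have fr: "span (f ` {..<N}) = UNIV" using assms unfolding is_frame_def .
  have dDIM: "d \<le> DIM(real^'n)"
  proof -
    have "d_Lam f N {..<N} \<le> DIM(real^'n)" unfolding d_Lam_def using dim_subset_UNIV[of "f ` {..<N}"] by simp
    then show ?thesis using d_le[of "{..<N}"] by simp
  qed
  define VL where "VL L = (if d \<le> dim (span (f ` L)) then span (f ` L) else span (f ` ({..<N} - L)))" for L
  have VLd: "d \<le> dim (VL L)" if "L \<subseteq> {..<N}" for L
    using d_le[OF that] unfolding VL_def d_Lam_def by (auto simp: max_def split: if_splits)
  define \<V> where "\<V> = VL ` Pow {..<N}"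
  have fV: "finite \<V>" unfolding \<V>_def by simp
  obtain W where W: "subspace W" "dim W = DIM(real^'n) - d"
    "\<forall>V\<in>\<V>. dim (span (V \<union> W)) = min DIM(real^'n) (dim V + (DIM(real^'n) - d))"
    using greedy[OF fV, of "DIM(real^'n) - d"] by auto
  have full: "span (VL L \<union> W) = UNIV" if "L \<subseteq> {..<N}" for L
  proof -
    have "VL L \<in> \<V>" unfolding \<V>_def using that by auto
    then have "dim (span (VL L \<union> W)) = DIM(real^'n)" using W(3) VLd[OF that] dDIM by auto
    then show ?thesis using dim_eq_full[of "VL L \<union> W"] by simp
  qed
  define M where "M = orthogonal_comp W"
  have M: "subspace M" unfolding M_def by (rule subspace_orthogonal_comp)
  have WM: "x \<bullet> y = 0" if "x \<in> W" "y \<in> M" for x y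
    using that unfolding M_def orthogonal_comp_def orthogonal_def by auto
  have "span (W \<union> M) = UNIV"
  proof -
    have "W + M = UNIV" unfolding M_def by (rule subspace_sum_orthogonal_comp[OF W(1)])
    moreover have "W + M \<subseteq> span (W \<union> M)"
      unfolding span_Un set_plus_def using span_superset[of W] span_superset[of M] by blast
    ultimately show ?thesis by auto
  qed
  then have "dim (W \<union> M) = DIM(real^'n)" using dim_eq_full[of "W \<union> M"] by simp
  moreover have "dim (W \<union> M) = dim W + dim M" by (rule dim_orthogonal_sum) (rule WM)
  ultimately have dimM: "dim M = d" using W(2) dDIM by simp
  have projW: "proj M w = 0" if "w \<in> W" for w
    using proj_zero[OF M] WM[OF that] by blast
  have lin: "linear (proj M)" by (rule proj_linear[OF M])
  have key: "proj M ` span (f ` L) \<supseteq> M" if "span (VL L \<union> W) = UNIV" "VL L = span (f ` L)" for L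
  proof
    fix m assume m: "m \<in> M"
    have "m \<in> span (VL L \<union> W)" using that by simp
    then obtain a b where ab: "a \<in> span (VL L)" "b \<in> span W" "m = a + b" unfolding span_Un by blast
    have a: "a \<in> span (f ` L)" using ab(1) that(2) by (simp add: span_span)
    have bW: "b \<in> W" using ab(2) W(1) by (metis span_eq_iff)
    have "m = proj M m" using proj_id[OF M m] by simp
    also have "\<dots> = proj M a + proj M b" unfolding ab(3) by (rule linear_add[OF lin])
    also have "\<dots> = proj M a" using projW[OF bW] by simp
    finally have "m = proj M a" .
    then show "m \<in> proj M ` span (f ` L)" using a by blast
  qed
  have img_sub: "proj M ` S \<subseteq> M" for S using proj_char(1)[OF M] by blast
  let ?g = "\<lambda>i. proj M (f i)"
  have CPM: "span (?g ` L) = M \<or> span (?g ` ({..<N} - L)) = M" if L: "L \<subseteq> {..<N}" for L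
  proof (cases "d \<le> dim (span (f ` L))")
    case True
    then have "VL L = span (f ` L)" unfolding VL_def by simp
    then have "span (?g ` L) = M" using span_proj_img[OF M, of f L] key[OF full[OF L]] img_sub[of "span (f ` L)"] by simp
    then show ?thesis ..
  next
    case False
    then have e: "VL L = span (f ` ({..<N} - L))" unfolding VL_def by simp
    have "M \<subseteq> proj M ` span (f ` ({..<N} - L))"
    proof
      fix m assume m: "m \<in> M"
      have "m \<in> span (VL L \<union> W)" using full[OF L] by simp
      then obtain a b where ab: "a \<in> span (VL L)" "b \<in> span W" "m = a + b" unfolding span_Un by blast
      have a: "a \<in> span (f ` ({..<N} - L))" using ab(1) e by (simp add: span_span)
      have bW: "b \<in> W" using ab(2) W(1) by (metis span_eq_iff)
      have "m = proj M m" using proj_id[OF M m] by simp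
      also have "\<dots> = proj M a + proj M b" unfolding ab(3) by (rule linear_add[OF lin])
      also have "\<dots> = proj M a" using projW[OF bW] by simp
      finally have "m = proj M a" .
      then show "m \<in> proj M ` span (f ` ({..<N} - L))" using a by blast
    qed
    then have "span (?g ` ({..<N} - L)) = M" using span_proj_img[OF M, of f "{..<N} - L"] img_sub[of "span (f ` ({..<N} - L))"] by simp
    then show ?thesis ..
  qed
  have FM: "F_PR f N M"
    unfolding F_PR_def pr_frame_for_def
  proof (intro conjI ballI impI)
    show "subspace M" by (rule M)
    show "?g ` {..<N} \<subseteq> M" using img_sub by blast
    have "proj M ` UNIV = M"
    proof
      show "proj M ` UNIV \<subseteq> M" by (rule img_sub)
      show "M \<subseteq> proj M ` UNIV"
      proof
        fix m assume "m \<in> M"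
        then have "m = proj M m" using proj_id[OF M] by simp
        then show "m \<in> proj M ` UNIV" by blast
      qed
    qed
    then show "span (?g ` {..<N}) = M" using span_proj_img[OF M, of f "{..<N}"] fr by simp
  next
    fix x y assume x: "x \<in> M" and y: "y \<in> M" and H: "\<forall>i<N. \<bar>x \<bullet> ?g i\<bar> = \<bar>y \<bullet> ?g i\<bar>"
    define L where "L = {i \<in> {..<N}. x \<bullet> ?g i = y \<bullet> ?g i}"
    have L: "L \<subseteq> {..<N}" unfolding L_def by auto
    have zero: "z = 0" if z: "z \<in> M" and S: "span S = M" and o: "\<forall>s\<in>S. z \<bullet> s = 0" for z S
    proof -
      have "orthogonal z z" using orthogonal_to_span[of z S z] o z S unfolding orthogonal_def by auto
      then show ?thesis by (simp add: orthogonal_def)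
    qed
    from CPM[OF L] show "x = y \<or> x = - y"
    proof
      assume S: "span (?g ` L) = M"
      have "\<forall>s\<in>?g ` L. (x - y) \<bullet> s = 0" unfolding L_def by (auto simp: inner_diff_left)
      moreover have "x - y \<in> M" using M x y by (rule subspace_diff)
      ultimately have "x - y = 0" using zero[OF _ S] by blast
      then show ?thesis by simp
    next
      assume S: "span (?g ` ({..<N} - L)) = M"
      have "\<forall>s\<in>?g ` ({..<N} - L). (x + y) \<bullet> s = 0"
      proof
        fix s assume "s \<in> ?g ` ({..<N} - L)"
        then obtain i where i: "i < N" "i \<notin> L" "s = ?g i" by auto
        have "x \<bullet> ?g i \<noteq> y \<bullet> ?g i" using i unfolding L_def by auto
        moreover have "\<bar>x \<bullet> ?g i\<bar> = \<bar>y \<bullet> ?g i\<bar>" using H i by auto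
        ultimately have "x \<bullet> ?g i = - (y \<bullet> ?g i)" by (auto simp: abs_eq_iff)
        then show "(x + y) \<bullet> s = 0" using i by (simp add: inner_add_left)
      qed
      moreover have "x + y \<in> M" using M x y by (rule subspace_add)
      ultimately have "x + y = 0" using zero[OF _ S] by blast
      then show ?thesis by (simp add: eq_neg_iff_add_eq_0)
    qed
  qed
  have maxM: "maximal_F_PR f N M"
    unfolding maximal_F_PR_def
  proof (intro conjI notI)
    show "F_PR f N M" by (rule FM)
    assume "\<exists>M'. F_PR f N M' \<and> M \<subset> M'"
    then obtain M' where M': "F_PR f N M'" "M \<subset> M'" by blast
    have "subspace M'" using M'(1) unfolding F_PR_def by simp
    moreover have "span M = M" "span M' = M'" using M \<open>subspace M'\<close> span_eq_iff by auto
    ultimately have "span M \<subset> span M'" using M'(2) by (simp only:)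
    then have "dim M < dim M'" by (rule dim_psubset)
    then show False using upper[OF M'(1)] dimM by simp
  qed
  show ?thesis
    unfolding d_def[symmetric]
    using maxM dimM upper unfolding maximal_F_PR_def by blast
qed

end
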